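(* For every integer $n\ge 1$ and every real $x>0$, \[ \left[\frac{1}{n}\left(\frac{x}{(n-1)!}-\left(\left(\frac{(n-1)!}{x}\right)^{1/n}+1\right)^{-n}\right)\right]^{-\frac{1}{n+1}} <\left((-1)^{n-1}\psi^{(n)}\right)^{-1}(x) <\left(\frac{(n-1)!}{x}\right)^{1/n}+\frac{1}{2}. \]
   Context: $\Gamma$ is the Euler gamma function and $\psi=\Gamma'/\Gamma$ is the digamma function; $\psi^{(n)}$ denotes its $n$-th derivative. For each integer $n\ge1$ the map $t\mapsto(-1)^{n-1}\psi^{(n)}(t)=n!\sum_{k\ge0}(t+k)^{-(n+1)}$ is a strictly decreasing bijection from $(0,\infty)$ onto $(0,\infty)$, and $\left((-1)^{n-1}\psi^{(n)}\right)^{-1}$ denotes its inverse function. *)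

theory Defs
  imports "HOL-Analysis.Analysis"
begin

definition polygamma_inv :: "nat \<Rightarrow> real \<Rightarrow> real" where
  "polygamma_inv n = the_inv_into {0<..} (\<lambda>t::real. (-1) ^ (n - 1) * Polygamma n t)"

end

theory Submission
  imports Defs
begin


definition Lm :: "real \<Rightarrow> nat \<Rightarrow> real" where
  "Lm a m = integral {a..a+1} (\<lambda>u. inverse (u^m))"

lemma cont_inv_pow: "a > 0 \<Longrightarrow> continuous_on {a..b} (\<lambda>u::real. inverse (u^m))"
  by (intro continuous_intros) auto

lemma Lm_0: "Lm a 0 = 1"
  by (simp add: Lm_def)

lemma Lm_pos: assumes "a > 0" shows "Lm a m > 0"
proof -
  have "integral {a..a+1} (\<lambda>u. 0::real) < integral {a..a+1} (\<lambda>u. inverse (u^m))"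
    using assms by (intro integral_less_real cont_inv_pow) auto
  thus ?thesis by (simp add: Lm_def)
qed

lemma Lm_closed:
  assumes "a > 0" "k \<ge> 1"
  shows "Lm a (Suc k) = (inverse (a^k) - inverse ((a+1)^k)) / k"
proof -
  have "((\<lambda>u. inverse (u^Suc k)) has_integral
          ((\<lambda>u. - inverse (u^k) / k) (a+1) - (\<lambda>u. - inverse (u^k) / k) a)) {a..a+1}"
  proof (rule fundamental_theorem_of_calculus)
    fix x assume x: "x \<in> {a..a+1}"
    hence "x > 0" using assms by auto
    have "((\<lambda>u. - inverse (u^k) / k) has_real_derivative inverse (x^Suc k)) (at x within {a..a+1})"
    proof -
      obtain j where j: "k = Suc j" using assms by (cases k) auto
      have "((\<lambda>u. - inverse (u^k) / k) has_real_derivative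
              (- (- (inverse (x^k) * (real k * x^(k-1)) * inverse (x^k))) / k)) (at x within {a..a+1})"
        using \<open>x > 0\<close> by (auto intro!: derivative_eq_intros)
      moreover have "(- (- (inverse (x^k) * (real k * x^(k-1)) * inverse (x^k))) / k) = inverse (x^Suc k)"
      proof -
        have "0 < x * (x * (x ^ j * x ^ j)) + x * (x * (real j * (x ^ j * x ^ j)))"
          using \<open>x > 0\<close> by (intro add_pos_nonneg) auto
        thus ?thesis using \<open>x > 0\<close> unfolding j by (simp add: field_simps)
      qed
      ultimately show ?thesis by simp
    qed
    thus "((\<lambda>u. - inverse (u^k) / k) has_vector_derivative inverse (x^Suc k)) (at x within {a..a+1})"
      by (simp add: has_real_derivative_iff_has_vector_derivative)
  qed simp
  hence "Lm a (Suc k) = (\<lambda>u. - inverse (u^k) / k) (a+1) - (\<lambda>u. - inverse (u^k) / k) a"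
    unfolding Lm_def by (rule integral_unique)
  thus ?thesis using assms by (simp add: field_simps)
qed

lemma Lm_CS:
  assumes "a > 0" "m \<ge> 1"
  shows "(Lm a m)^2 < Lm a (m-1) * Lm a (Suc m)"
proof -
  define A where "A = Lm a (m-1)"
  define B where "B = Lm a m"
  define C where "C = Lm a (Suc m)"
  have A: "A > 0" using Lm_pos assms A_def by auto
  define l where "l = B / A"
  have eq: "inverse (u^(Suc m)) * (l*u - 1)^2 = l^2 * inverse (u^(m-1)) - 2*l*inverse(u^m) + inverse(u^Suc m)"
    if "u > 0" for u :: real
  proof -
    obtain j where j: "m = Suc j" using assms by (cases m) auto
    show ?thesis using that unfolding j by (simp add: field_simps power2_eq_square)
  qed
  define g where "g = (\<lambda>u::real. inverse (u^(Suc m)) * (l*u - 1)^2)"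
  have gc: "continuous_on {a..a + 1} g"
    unfolding g_def using assms by (intro continuous_intros) auto
  have gi: "(g has_integral integral {a..a+1} g) {a..a+1}"
    using gc integrable_continuous_interval by blast
  have gn: "0 \<le> g u" if "u \<in> {a..a+1}" for u
    using that assms unfolding g_def by auto
  have "0 \<le> integral {a..a+1} g" using gi gn by (rule has_integral_nonneg)
  moreover have "integral {a..a+1} g \<noteq> 0"
  proof
    assume z: "integral {a..a+1} g = 0"
    have "g x = 0" if "x \<in> {a..a+1}" for x
      using has_integral_0_cbox_imp_0[of a "a+1" g x] gc gn gi z that by auto
    hence "g a = 0" "g (a+1) = 0" by auto
    hence "l*a = 1" "l*(a+1) = 1" using assms unfolding g_def by auto
    thus False by (simp add: algebra_simps)
  qed
  ultimately have "0 < integral {a..a+1} g" by simp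
  hence "0 < integral {a..a+1} (\<lambda>u. inverse (u^(Suc m)) * (l*u - 1)^2)" unfolding g_def .
  also have "integral {a..a+1} (\<lambda>u. inverse (u^(Suc m)) * (l*u - 1)^2)
      = integral {a..a+1} (\<lambda>u. l^2 * inverse (u^(m-1)) - 2*l*inverse(u^m) + inverse(u^Suc m))"
    using eq assms by (intro integral_cong) auto
  also have "\<dots> = l^2 * A - 2*l*B + C"
  proof -
    have i1: "(\<lambda>u. inverse (u^j)) integrable_on {a..a+1}" for j
      using assms by (intro integrable_continuous_interval cont_inv_pow)
    have i2: "(\<lambda>u. inverse u * inverse (u^j)) integrable_on {a..a+1}" for j
      using assms by (intro integrable_continuous_interval continuous_intros) auto
    have j1: "(\<lambda>u. l^2 * inverse (u^(m-1))) integrable_on {a..a+1}"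
      using integrable_on_cmult_left[OF i1, of "l^2"] by simp
    have j2: "(\<lambda>u. 2*l * inverse (u^m)) integrable_on {a..a+1}"
      using integrable_on_cmult_left[OF i1, of "2*l"] by simp
    have "integral {a..a+1} (\<lambda>u. l^2 * inverse (u^(m-1)) - 2*l*inverse(u^m) + inverse(u^Suc m))
       = integral {a..a+1} (\<lambda>u. l^2 * inverse (u^(m-1)) - 2*l*inverse(u^m)) + integral {a..a+1} (\<lambda>u. inverse(u^Suc m))"
      by (rule integral_add) (rule integrable_diff[OF j1 j2], rule i1)
    also have "integral {a..a+1} (\<lambda>u. l^2 * inverse (u^(m-1)) - 2*l*inverse(u^m))
       = integral {a..a+1} (\<lambda>u. l^2 * inverse (u^(m-1))) - integral {a..a+1} (\<lambda>u. 2*l*inverse(u^m))"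
      by (rule integral_diff[OF j1 j2])
    finally show ?thesis
    unfolding A_def B_def C_def Lm_def by simp
  qed
  finally have "0 < l^2 * A - 2*l*B + C" .
  hence "0 < C - B^2/A" unfolding l_def using A by (simp add: field_simps power2_eq_square)
  thus ?thesis using A unfolding A_def B_def C_def by (simp add: field_simps)
qed



lemma Lm_pow_step:
  assumes "a > 0" "Lm a m ^ (m+1) \<le> Lm a (m+1) ^ m"
  shows "Lm a (m+1) ^ (m+2) < Lm a (m+2) ^ (m+1)"
proof -
  define A where "A = Lm a m"
  define B where "B = Lm a (m+1)"
  define C where "C = Lm a (m+2)"
  have pos: "A > 0" "B > 0" "C > 0" unfolding A_def B_def C_def using Lm_pos assms by auto
  have cs: "B^2 < A * C" using Lm_CS[OF assms(1), of "m+1"] unfolding A_def B_def C_def by simp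
  have "(B^2)^(m+1) < (A*C)^(m+1)"
    using cs pos by (intro power_strict_mono) auto
  also have "\<dots> = A^(m+1) * C^(m+1)" by (simp add: power_mult_distrib)
  also have "\<dots> \<le> B^m * C^(m+1)"
    using assms(2) pos unfolding A_def B_def by (intro mult_right_mono) auto
  finally have lt: "(B^2)^(m+1) < B^m * C^(m+1)" .
  have e: "(B^2)^(m+1) = B^m * B^(m+2)"
    by (subst power_mult[symmetric], subst power_add[symmetric], rule arg_cong[where f="(^) B"]) simp
  have "B^m * B^(m+2) < B^m * C^(m+1)" using lt unfolding e .
  hence "B^(m+2) < C^(m+1)" using pos by simp
  thus ?thesis unfolding B_def C_def .
qed

lemma Lm_pow:
  assumes "a > 0" "m \<ge> 1"
  shows "Lm a m ^ (m+1) < Lm a (m+1) ^ m"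
  using assms(2)
proof (induction m rule: dec_induct)
  case base
  show ?case using Lm_pow_step[OF assms(1), of 0] by (simp add: Lm_0)
next
  case (step m)
  show ?case using Lm_pow_step[OF assms(1), of m] step.IH by simp
qed

definition Ic :: "nat \<Rightarrow> real \<Rightarrow> real" where
  "Ic n u = (inverse (u^n) - inverse ((u+1)^n)) / n"

definition Kc :: "nat \<Rightarrow> real \<Rightarrow> real" where
  "Kc n u = inverse (u^Suc n) - inverse ((u+1)^Suc n)"

lemma deriv_inv_pow:
  assumes "x + c \<noteq> 0"
  shows "((\<lambda>u::real. inverse ((u+c)^k)) has_real_derivative -(real k * inverse ((x+c)^Suc k))) (at x)"
proof -
  have d: "((\<lambda>u::real. inverse ((u+c)^k)) has_real_derivative
              (- (inverse ((x+c)^k) * (real k * (x+c)^(k-1) * 1) * inverse ((x+c)^k)))) (at x)"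
    using assms by (auto intro!: derivative_eq_intros)
  have e: "(- (inverse ((x+c)^k) * (real k * (x+c)^(k-1) * 1) * inverse ((x+c)^k))) = -(real k * inverse ((x+c)^Suc k))"
  proof (cases k)
    case (Suc j)
    have g: "inverse (y^Suc j) * (real (Suc j) * y^j * 1) * inverse (y^Suc j) = real (Suc j) * inverse (y^Suc (Suc j))"
      if "y \<noteq> 0" for y :: real
      using that by (simp add: field_simps)
    show ?thesis using g[OF assms] Suc by simp
  qed simp
  show ?thesis using d unfolding e .
qed

lemma Ic_deriv:
  assumes "x > 0" "n \<ge> 1"
  shows "(Ic n has_real_derivative - Kc n x) (at x)"
proof -
  have d1: "((\<lambda>u::real. inverse ((u+1)^n)) has_real_derivative -(real n * inverse ((x+1)^Suc n))) (at x)"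
    using deriv_inv_pow[of x 1 n] assms by simp
  have d0: "((\<lambda>u::real. inverse (u^n)) has_real_derivative -(real n * inverse (x^Suc n))) (at x)"
    using deriv_inv_pow[of x 0 n] assms by simp
  have "((\<lambda>u. (inverse (u^n) - inverse ((u+1)^n)) / n) has_real_derivative
          ((-(real n * inverse (x^Suc n))) - (-(real n * inverse ((x+1)^Suc n)))) / n) (at x)"
    using assms by (intro DERIV_cdivide DERIV_diff d0 d1)
  moreover have "((-(real n * inverse (x^Suc n))) - (-(real n * inverse ((x+1)^Suc n)))) / n = - Kc n x"
    using assms unfolding Kc_def by (simp add: divide_simps) (simp add: algebra_simps)
  ultimately show ?thesis unfolding Ic_def[abs_def] by simp
qed

lemma Ic_Lm: "u > 0 \<Longrightarrow> n \<ge> 1 \<Longrightarrow> Ic n u = Lm u (Suc n)"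
  by (simp add: Lm_closed Ic_def)

lemma Kc_Lm: "u > 0 \<Longrightarrow> n \<ge> 1 \<Longrightarrow> Kc n u = (n+1) * Lm u (Suc (Suc n))"
  by (subst Lm_closed) (auto simp: Kc_def add.commute)

lemma Ic_pos: "u > 0 \<Longrightarrow> n \<ge> 1 \<Longrightarrow> Ic n u > 0"
  using Ic_Lm Lm_pos by auto

definition Hf :: "nat \<Rightarrow> real \<Rightarrow> real" where
  "Hf n u = Ic n u powr (- 1 / (real n + 1))"

lemma Hf_deriv_gt:
  assumes "x > 0" "n \<ge> 1"
  shows "\<exists>y. ((\<lambda>u. Hf n u - u) has_real_derivative y) (at x) \<and> y > 0"
proof -
  define I where "I = Ic n x"
  define K where "K = Lm x (Suc (Suc n))"
  have I: "I > 0" unfolding I_def using Ic_pos assms by auto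
  have K: "K > 0" unfolding K_def using Lm_pos assms by auto
  have "((\<lambda>u. Hf n u - u) has_real_derivative
      ((- 1 / (real n + 1)) * I powr (- 1 / (real n + 1) - 1) * (- Kc n x) - 1)) (at x)"
    unfolding Hf_def[abs_def] I_def
    using Ic_pos[OF assms]
    by (auto intro!: derivative_eq_intros Ic_deriv assms)
  moreover have "(- 1 / (real n + 1)) * I powr (- 1 / (real n + 1) - 1) * (- Kc n x) - 1
     = K * I powr (- ((real n + 2) / (real n + 1))) - 1"
  proof -
    have ee: "- 1 / (real n + 1) - 1 = - ((real n + 2) / (real n + 1))" by (simp add: field_simps)
    have gg: "(- 1 / (real n + 1)) * P * (- Kc n x) - 1 = K * P - 1" for P
      using Kc_Lm[OF assms] unfolding K_def by (simp add: field_simps)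
    show ?thesis unfolding ee by (rule gg)
  qed
  moreover have "K * I powr (- ((real n + 2) / (real n + 1))) > 1"
  proof -
    have pw: "I ^ (n+2) < K ^ (n+1)"
      using Lm_pow[OF assms(1), of "Suc n"] assms Ic_Lm[OF assms] unfolding I_def K_def by simp
    have "(I powr ((real n + 2) / (real n + 1))) ^ (n+1) = (I powr ((real n + 2) / (real n + 1))) powr (real (n+1))"
      using I by (intro powr_realpow[symmetric]) simp
    also have "\<dots> = I powr (((real n + 2) / (real n + 1)) * real (n+1))" by (rule powr_powr)
    also have "((real n + 2) / (real n + 1)) * real (n+1) = real (n+2)" by (simp add: field_simps)
    also have "I powr real (n+2) = I ^ (n+2)" using I by (rule powr_realpow)
    finally have "(I powr ((real n + 2) / (real n + 1))) ^ (n+1) < K ^ (n+1)" using pw by simp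
    hence lt: "I powr ((real n + 2) / (real n + 1)) < K"
      using power_less_imp_less_base[of _ "n+1" K] K by (meson less_imp_le)
    have "I powr (- ((real n + 2) / (real n + 1))) = inverse (I powr ((real n + 2) / (real n + 1)))"
      using I by (simp add: powr_minus)
    moreover have "K * inverse (I powr ((real n + 2) / (real n + 1))) > 1"
      using lt I by (simp add: field_simps)
    ultimately show ?thesis by simp
  qed
  ultimately show ?thesis by auto
qed

lemma Hf_step:
  assumes "a > 0" "n \<ge> 1"
  shows "Hf n (a+1) > Hf n a + 1"
proof -
  have "Hf n a - a < Hf n (a+1) - (a+1)"
    by (rule DERIV_pos_imp_increasing[of a "a+1"]) (use Hf_deriv_gt assms in auto)
  thus ?thesis by simp
qed



definition Fp :: "nat \<Rightarrow> real \<Rightarrow> real" where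
  "Fp n t = (-1) ^ (n - 1) * Polygamma n t"

lemma Fp_sums:
  assumes "t > 0" "n \<ge> 1"
  shows "(\<lambda>k. inverse ((t + real k)^Suc n)) sums (Fp n t / fact n)"
proof -
  have "(\<lambda>k. inverse ((t + of_nat k)^Suc n)) sums ((-1) ^ Suc n * Polygamma n t / fact n)"
    using assms by (intro Polygamma_LIMSEQ) auto
  moreover have e: "((-1::real) ^ Suc n) = (-1) ^ (n - 1)"
  proof -
    obtain j where "n = Suc j" using assms by (cases n) auto
    thus ?thesis by simp
  qed
  ultimately show ?thesis unfolding Fp_def by (simp only: e)
qed

lemma sums_less_strict:
  fixes f g :: "nat \<Rightarrow> real"
  assumes "f sums a" "g sums b" "\<And>k. f k \<le> g k" "f j < g j"
  shows "a < b"
proof -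
  have "(\<lambda>k. g k - f k) sums (b - a)" using assms by (intro sums_diff)
  moreover have "0 < (\<Sum>k. g k - f k)"
    using assms \<open>(\<lambda>k. g k - f k) sums (b - a)\<close>
    by (subst suminf_pos_iff) (auto simp: sums_iff intro!: exI[of _ j])
  ultimately show ?thesis by (simp add: sums_iff)
qed

lemma Fp_strict_anti:
  assumes "0 < s" "s < t" "n \<ge> 1"
  shows "Fp n t < Fp n s"
proof -
  have "Fp n t / fact n < Fp n s / fact n"
  proof (rule sums_less_strict[OF Fp_sums Fp_sums, of t n s n 0])
    fix k
    show "inverse ((t + real k) ^ Suc n) \<le> inverse ((s + real k) ^ Suc n)"
      using assms by (intro le_imp_inverse_le power_mono) auto
    show "inverse ((t + real 0) ^ Suc n) < inverse ((s + real 0) ^ Suc n)"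
      using assms by (intro less_imp_inverse_less power_strict_mono) auto
  qed (use assms in auto)
  thus ?thesis by (simp add: divide_strict_right_mono_neg field_simps)
qed

lemma Fp_cont:
  assumes "a > 0"
  shows "continuous_on {a..b} (Fp n)"
  unfolding Fp_def[abs_def] using assms
  by (intro continuous_intros continuous_on_Polygamma) (auto elim!: nonpos_Ints_cases)




lemma mid_ineq:
  assumes "c > 1/2" "n \<ge> 1"
  shows "inverse (c^Suc n) < (inverse ((c-1/2)^n) - inverse ((c+1/2)^n)) / n"
proof -
  define q where "q = inverse (c^Suc n)"
  define \<phi> where "\<phi> = (\<lambda>h::real. inverse ((c-h)^n) - inverse ((h+c)^n) - 2*n*h*q)"
  have "\<phi> 0 < \<phi> (1/2)"
  proof (rule DERIV_pos_imp_increasing_open[of 0 "1/2" \<phi>])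
    fix h :: real assume h: "0 < h" "h < 1/2"
    have d1: "((\<lambda>h. inverse ((c-h)^n)) has_real_derivative (-(real n * inverse ((c-h)^Suc n))) * (-1)) (at h)"
    proof -
      have dd: "((\<lambda>h. c - h) has_real_derivative -1) (at h)" by (auto intro!: derivative_eq_intros)
      have ch: "c - h + 0 \<noteq> 0" using h assms by simp
      show ?thesis
        using DERIV_chain2[where f="\<lambda>u. inverse (u^n)" and g="\<lambda>h. c - h",
          OF deriv_inv_pow[OF ch, simplified] dd] by simp
    qed
    have d2: "((\<lambda>h. inverse ((h+c)^n)) has_real_derivative (-(real n * inverse ((h+c)^Suc n)))) (at h)"
      using deriv_inv_pow[of h c n] h assms by auto
    have d: "(\<phi> has_real_derivative ((-(real n * inverse ((c-h)^Suc n))) * (-1) - (-(real n * inverse ((h+c)^Suc n))) - 2*n*q)) (at h)"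
      unfolding \<phi>_def by (intro DERIV_diff d1 d2) (auto intro!: derivative_eq_intros)
    define A where "A = inverse ((c-h)^Suc n)"
    define B where "B = inverse ((h+c)^Suc n)"
    have A: "A > 0" and B: "B > 0" and q: "q > 0" unfolding A_def B_def q_def using h assms by auto
    have "(c-h)*(h+c) < c*c" using h by (simp add: algebra_simps)
    hence "((c-h)*(h+c))^Suc n < (c*c)^Suc n"
      using h assms by (intro power_strict_mono) auto
    hence "inverse ((c*c)^Suc n) < inverse (((c-h)*(h+c))^Suc n)"
      using h assms by (intro less_imp_inverse_less) auto
    moreover have e1: "inverse ((c*c)^Suc n) = q*q" unfolding q_def by (simp only: power_mult_distrib inverse_mult_distrib)
    moreover have e2: "inverse (((c-h)*(h+c))^Suc n) = A*B" unfolding A_def B_def by (simp only: power_mult_distrib inverse_mult_distrib)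
    ultimately have AB: "q*q < A*B" by simp
    have "A + B > 2*q"
    proof (rule ccontr)
      assume "\<not> A + B > 2*q"
      hence "A + B \<le> 2*q" by simp
      hence "(A+B)*(A+B) \<le> (2*q)*(2*q)" using A B by (intro mult_mono) auto
      moreover have "(A-B)*(A-B) \<ge> 0" by simp
      ultimately show False using AB by (simp add: algebra_simps)
    qed
    hence "real n * (A + B - 2*q) > 0" using assms by (intro mult_pos_pos) auto
    hence "n*A + n*B - 2*n*q > 0" by (simp add: algebra_simps)
    thus "\<exists>y. (\<phi> has_real_derivative y) (at h) \<and> 0 < y"
      using d unfolding A_def B_def by (intro exI[of _ "_"] conjI) (auto simp: algebra_simps)
  next
    show "continuous_on {0..1/2} \<phi>"
      unfolding \<phi>_def using assms by (intro continuous_intros) auto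
  qed simp
  hence "0 < inverse ((c-1/2)^n) - inverse ((c+1/2)^n) - n*q"
    unfolding \<phi>_def by (simp add: add.commute)
  thus ?thesis using assms unfolding q_def by (simp add: field_simps)
qed




lemma inv_pow_tendsto:
  assumes "n \<ge> 1"
  shows "(\<lambda>k. inverse ((c + real k)^n) / real n) \<longlonglongrightarrow> 0"
proof -
  have "(\<lambda>k. inverse (c + real k)) \<longlonglongrightarrow> 0"
    by (intro tendsto_inverse_0_at_top filterlim_tendsto_add_at_top[OF tendsto_const filterlim_real_sequentially])
  hence "(\<lambda>k. (inverse (c + real k))^n) \<longlonglongrightarrow> 0^n"
    by (intro tendsto_intros)
  moreover have z: "(0::real)^n = 0" using assms by simp
  ultimately have "(\<lambda>k. (inverse (c + real k))^n) \<longlonglongrightarrow> 0" by (simp only: z)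
  hence "(\<lambda>k. (inverse (c + real k))^n / real n) \<longlonglongrightarrow> 0" by (rule tendsto_divide_zero)
  thus ?thesis by (simp add: power_inverse)
qed

lemma fact_div: "n \<ge> 1 \<Longrightarrow> (fact n :: real) / real n = fact (n - 1)"
  by (cases n) auto

lemma UB:
  assumes "s > 1/2" "n \<ge> 1"
  shows "Fp n s < fact (n-1) * inverse ((s-1/2)^n)"
proof -
  define g where "g = (\<lambda>k. inverse ((s - 1/2 + real k)^n) / real n)"
  have "(\<lambda>k. g k - g (Suc k)) sums (g 0 - 0)"
    unfolding g_def by (intro telescope_sums' inv_pow_tendsto assms)
  moreover have "g k - g (Suc k) = (inverse ((s + k - 1/2)^n) - inverse ((s + k + 1/2)^n)) / n" for k
    unfolding g_def by (simp add: diff_divide_distrib algebra_simps)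
  ultimately have t: "(\<lambda>k. (inverse ((s + k - 1/2)^n) - inverse ((s + k + 1/2)^n)) / n) sums (inverse ((s-1/2)^n) / n)"
    unfolding g_def by simp
  have s0: "s > 0" using assms by simp
  have "Fp n s / fact n < inverse ((s-1/2)^n) / n"
  proof (rule sums_less_strict[OF Fp_sums[OF s0 assms(2)] t, of 0])
    fix k :: nat
    show "inverse ((s + real k) ^ Suc n) \<le> (inverse ((s + k - 1/2)^n) - inverse ((s + k + 1/2)^n)) / n"
      using mid_ineq[of "s + k" n] assms by simp
    show "inverse ((s + real 0) ^ Suc n) < (inverse ((s + real 0 - 1/2)^n) - inverse ((s + real 0 + 1/2)^n)) / n"
      using mid_ineq[of "s" n] assms by simp
  qed
  hence "Fp n s < fact n * (inverse ((s-1/2)^n) / n)" by (simp add: field_simps)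
  also have "\<dots> = (fact n / real n) * inverse ((s-1/2)^n)" by (simp only: times_divide_eq_right times_divide_eq_left mult.commute)
  also have "\<dots> = fact (n-1) * inverse ((s-1/2)^n)" using fact_div[OF assms(2)] by simp
  finally show ?thesis .
qed

lemma Hf_pos: "a > 0 \<Longrightarrow> n \<ge> 1 \<Longrightarrow> Hf n a > 0"
  unfolding Hf_def using Ic_pos[of a n] by (simp add: powr_gt_zero)

lemma Ic_Hf:
  assumes "a > 0" "n \<ge> 1"
  shows "Ic n a = inverse (Hf n a ^ Suc n)"
proof -
  have I: "Ic n a > 0" using Ic_pos assms by auto
  have "Hf n a ^ Suc n = (Ic n a powr (- 1 / (real n + 1))) powr (real (Suc n))"
    unfolding Hf_def using I by (intro powr_realpow[symmetric]) simp
  also have "\<dots> = Ic n a powr ((- 1 / (real n + 1)) * real (Suc n))" by (rule powr_powr)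
  also have "(- 1 / (real n + 1)) * real (Suc n) = -1" by (simp add: field_simps)
  also have "Ic n a powr (-1) = inverse (Ic n a)" using I by (simp add: powr_minus)
  finally show ?thesis by simp
qed

lemma Hf_shift:
  assumes "s0 > 0" "n \<ge> 1"
  shows "Hf n s0 + real k \<le> Hf n (s0 + real k) \<and> (k \<ge> 1 \<longrightarrow> Hf n s0 + real k < Hf n (s0 + real k))"
proof (induction k)
  case 0 thus ?case by simp
next
  case (Suc k)
  have e: "s0 + real (Suc k) = (s0 + real k) + 1" by simp
  have "Hf n (s0 + real k) + 1 < Hf n (s0 + real (Suc k))"
    unfolding e using Hf_step[of "s0 + real k" n] assms by simp
  moreover have "real (Suc k) = real k + 1" by simp
  ultimately show ?case using Suc.IH by linarith
qed

lemma LB: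
  assumes "s0 > 0" "n \<ge> 1"
  shows "Fp n (Hf n s0) > fact (n-1) * inverse (s0^n)"
proof -
  define \<xi> where "\<xi> = Hf n s0"
  have xi: "\<xi> > 0" unfolding \<xi>_def using Hf_pos assms by auto
  define g where "g = (\<lambda>k. inverse ((s0 + real k)^n) / real n)"
  have "(\<lambda>k. g k - g (Suc k)) sums (g 0 - 0)"
    unfolding g_def by (intro telescope_sums' inv_pow_tendsto assms)
  moreover have "g k - g (Suc k) = Ic n (s0 + k)" for k
    unfolding g_def Ic_def by (simp add: diff_divide_distrib algebra_simps)
  ultimately have t: "(\<lambda>k. Ic n (s0 + k)) sums (inverse (s0^n) / n)"
    unfolding g_def by simp
  have le: "Ic n (s0 + k) \<le> inverse ((\<xi> + real k) ^ Suc n)" for k :: nat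
  proof -
    have "Ic n (s0 + k) = inverse (Hf n (s0 + k) ^ Suc n)" using Ic_Hf assms by simp
    also have "\<dots> \<le> inverse ((\<xi> + real k) ^ Suc n)"
      using Hf_shift[OF assms, of k] xi unfolding \<xi>_def by (intro le_imp_inverse_le power_mono) auto
    finally show ?thesis .
  qed
  have lt: "Ic n (s0 + real 1) < inverse ((\<xi> + real 1) ^ Suc n)"
  proof -
    have "Ic n (s0 + real 1) = inverse (Hf n (s0 + real 1) ^ Suc n)" using Ic_Hf assms by simp
    also have "\<dots> < inverse ((\<xi> + real 1) ^ Suc n)"
      using Hf_shift[OF assms, of 1] xi unfolding \<xi>_def by (intro less_imp_inverse_less power_strict_mono) auto
    finally show ?thesis .
  qed
  have "inverse (s0^n) / n < Fp n \<xi> / fact n"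
    by (rule sums_less_strict[OF t Fp_sums[OF xi assms(2)] le lt])
  hence "fact n * (inverse (s0^n) / n) < Fp n \<xi>" by (simp add: field_simps)
  moreover have "fact n * (inverse (s0^n) / n) = (fact n / n) * inverse (s0^n)"
    by (simp only: times_divide_eq_right times_divide_eq_left mult.commute)
  moreover have "(fact n / n) * inverse (s0^n) = fact (n-1) * inverse (s0^n)"
    using fact_div[OF assms(2)] by simp
  ultimately show ?thesis unfolding \<xi>_def by simp
qed


theorem theorem2p1:
  fixes n :: nat and x :: real
  assumes "n \<ge> 1" and "x > 0"
  shows "((1 / real n) * (x / fact (n - 1)
            - ((fact (n - 1) / x) powr (1 / real n) + 1) powr (- real n)))
           powr (- (1 / (real n + 1)))
         < polygamma_inv n x
       \<and> polygamma_inv n x < (fact (n - 1) / x) powr (1 / real n) + 1 / 2"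
proof -
  define s0 where "s0 = (fact (n - 1) / x) powr (1 / real n)"
  have fp: "(fact (n-1) :: real) > 0" by simp
  have s0: "s0 > 0" unfolding s0_def using assms fp by simp
  have s0n: "s0 ^ n = fact (n-1) / x"
  proof -
    have "s0 ^ n = s0 powr (real n)" using s0 by (simp add: powr_realpow)
    also have "\<dots> = (fact (n - 1) / x) powr (1 / real n * real n)"
      unfolding s0_def by (rule powr_powr)
    also have "1 / real n * real n = 1" using assms by simp
    finally show ?thesis using assms fp by simp
  qed
  have xeq: "x = fact (n-1) * inverse (s0^n)" using s0n assms fp s0 by (simp add: field_simps)
  define \<xi> where "\<xi> = Hf n s0"
  have L: "((1 / real n) * (x / fact (n - 1) - (s0 + 1) powr (- real n))) powr (- (1 / (real n + 1))) = \<xi>"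
  proof -
    have "x / fact (n - 1) = inverse (s0^n)" using xeq fp by simp
    moreover have "(s0 + 1) powr (- real n) = inverse ((s0+1)^n)"
      using s0 by (simp add: powr_minus powr_realpow)
    ultimately have "(1 / real n) * (x / fact (n - 1) - (s0 + 1) powr (- real n)) = Ic n s0"
      unfolding Ic_def by simp
    moreover have "- (1 / (real n + 1)) = - 1 / (real n + 1)" by simp
    ultimately show ?thesis unfolding \<xi>_def Hf_def by simp
  qed
  have xi: "\<xi> > 0" unfolding \<xi>_def using Hf_pos s0 assms by auto
  have F1: "Fp n \<xi> > x" unfolding \<xi>_def xeq using LB[OF s0 assms(1)] .
  have F2: "Fp n (s0 + 1/2) < x" unfolding xeq using UB[of "s0 + 1/2" n] s0 assms by simp
  have lt: "\<xi> < s0 + 1/2"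
  proof (rule ccontr)
    assume "\<not> \<xi> < s0 + 1/2"
    hence "s0 + 1/2 \<le> \<xi>" by simp
    hence "Fp n \<xi> \<le> Fp n (s0 + 1/2)"
      using Fp_strict_anti[of "s0 + 1/2" \<xi> n] s0 assms by (cases "s0 + 1/2 = \<xi>") auto
    thus False using F1 F2 by simp
  qed
  obtain t where t: "\<xi> \<le> t" "t \<le> s0 + 1/2" "Fp n t = x"
    using IVT2'[where f="Fp n" and a=\<xi> and b="s0 + 1/2" and y=x] F1 F2 lt Fp_cont[OF xi] by auto
  have tne: "t \<noteq> \<xi>" "t \<noteq> s0 + 1/2" using t F1 F2 by auto
  have inj: "inj_on (\<lambda>t::real. (-1) ^ (n - 1) * Polygamma n t) {0<..}"
  proof (rule inj_onI)
    fix u v :: real assume uv: "u \<in> {0<..}" "v \<in> {0<..}" "(-1) ^ (n - 1) * Polygamma n u = (-1) ^ (n - 1) * Polygamma n v"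
    show "u = v"
    proof (rule ccontr)
      assume "u \<noteq> v"
      hence "u < v \<or> v < u" by auto
      thus False using Fp_strict_anti[of u v n] Fp_strict_anti[of v u n] uv assms
        unfolding Fp_def by auto
    qed
  qed
  have pinv: "polygamma_inv n x = t"
    unfolding polygamma_inv_def
    by (rule the_inv_into_f_eq[OF inj]) (use t xi tne in \<open>auto simp: Fp_def\<close>)
  show ?thesis
    unfolding pinv using L t tne unfolding s0_def by auto
qed

end
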